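(* Let $A_1,\dots,A_n$ be independent events with probabilities $p_1,\dots,p_n\in(0,1)$ and let $r_1,\dots,r_n\ge0$ satisfy $\sum_{i\in S} r_i+\prod_{i\in S}(1-p_i)\le 1$ for every $S\subseteq\{1,\dots,n\}$. Suppose this inequality holds with equality for some set $S_0$. Then there is a probability distribution over permutations $\pi$ of $\{1,\dots,n\}$ (chosen independently of the events) such that $\Pr(A_i$ occurs and no $A_j$ with $j$ preceding $i$ in $\pi$ occurs$)\ge r_i$ for every $i$, and such that every permutation with positive probability places all elements of $S_0$ before all elements outside $S_0$. *)

theory Defs
  imports "HOL-Probability.Probability" "HOL-Combinatorics.Permutations"
begin

text \<open>A permutation of {1..n} is encoded by its position function \<sigma> (\<sigma> permutes {1..n});
  j precedes i in \<sigma> iff \<sigma> j < \<sigma> i.\<close>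
definition first_event :: "nat \<Rightarrow> (nat \<Rightarrow> 'a set) \<Rightarrow> (nat \<Rightarrow> nat) \<Rightarrow> nat \<Rightarrow> 'a set" where
  "first_event n A \<sigma> i = A i - (\<Union>j\<in>{j\<in>{1..n}. \<sigma> j < \<sigma> i}. A j)"

end

theory Submission
  imports Defs
begin


definition vtx :: "(nat set \<Rightarrow> real) \<Rightarrow> nat set \<Rightarrow> (nat \<Rightarrow> nat) \<Rightarrow> nat \<Rightarrow> real" where
  "vtx f N \<sigma> i = f (insert i {j\<in>N. \<sigma> j < \<sigma> i}) - f {j\<in>N. \<sigma> j < \<sigma> i}"

definition isbase :: "(nat set \<Rightarrow> real) \<Rightarrow> nat set \<Rightarrow> (nat \<Rightarrow> real) \<Rightarrow> bool" where
  "isbase f N x \<longleftrightarrow> (\<forall>S. S \<subseteq> N \<longrightarrow> sum x S \<le> f S) \<and> sum x N = f N"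

definition good :: "(nat set \<Rightarrow> real) \<Rightarrow> nat set \<Rightarrow> (nat \<Rightarrow> real) \<Rightarrow> (nat \<Rightarrow> nat) pmf \<Rightarrow> bool" where
  "good f N x D \<longleftrightarrow> finite (set_pmf D) \<and> (\<forall>\<sigma>\<in>set_pmf D. inj_on \<sigma> N) \<and>
     (\<forall>i\<in>N. measure_pmf.expectation D (\<lambda>\<sigma>. vtx f N \<sigma> i) = x i)"

definition cmb :: "nat set \<Rightarrow> (nat \<Rightarrow> nat) \<Rightarrow> (nat \<Rightarrow> nat) \<Rightarrow> nat \<Rightarrow> nat" where
  "cmb T a b k = (if k \<in> T then a k else b k + Suc (\<Sum>t\<in>T. a t))"

lemma cmb_le: "finite (T::nat set) \<Longrightarrow> t \<in> T \<Longrightarrow> a t \<le> (\<Sum>t\<in>T. (a::nat\<Rightarrow>nat) t)"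
  using member_le_sum[of t T a] by simp

lemma cmb_pre_T:
  assumes "finite T" "T \<subseteq> N" "i \<in> T"
  shows "{j\<in>N. cmb T a b j < cmb T a b i} = {j\<in>T. a j < a i}"
  using cmb_le[OF assms(1,3), of a] assms by (auto simp: cmb_def)

lemma cmb_pre_nT:
  assumes "finite T" "T \<subseteq> N" "i \<in> N - T"
  shows "{j\<in>N. cmb T a b j < cmb T a b i} = T \<union> {j\<in>N-T. b j < b i}"
  using cmb_le[OF assms(1), of _ a] assms by (force simp: cmb_def)

lemma cmb_order: "finite T \<Longrightarrow> i \<in> T \<Longrightarrow> j \<notin> T \<Longrightarrow> cmb T a b i < cmb T a b j"
  using cmb_le[of T i a] by (simp add: cmb_def)

lemma cmb_inj:
  assumes "finite T" "inj_on a T" "inj_on b (N - T)"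
  shows "inj_on (cmb T a b) N"
proof (rule inj_onI)
  fix x y assume xy: "x \<in> N" "y \<in> N" "cmb T a b x = cmb T a b y"
  show "x = y"
  proof (cases "x \<in> T"; cases "y \<in> T")
    assume "x \<in> T" "y \<in> T" then show ?thesis using xy assms(2) by (auto simp: cmb_def inj_on_def)
  next
    assume "x \<in> T" "y \<notin> T" then show ?thesis using xy cmb_order[OF assms(1), of x y a b] by simp
  next
    assume "x \<notin> T" "y \<in> T" then show ?thesis using xy cmb_order[OF assms(1), of y x a b] by simp
  next
    assume "x \<notin> T" "y \<notin> T" then show ?thesis using xy assms(3) by (auto simp: cmb_def inj_on_def)
  qed
qed

lemma vtx_cmb_T:
  assumes "finite T" "T \<subseteq> N" "i \<in> T"
  shows "vtx f N (cmb T a b) i = vtx f T a i"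
  unfolding vtx_def cmb_pre_T[OF assms] ..

lemma vtx_cmb_nT:
  assumes "finite T" "T \<subseteq> N" "i \<in> N - T"
  shows "vtx f N (cmb T a b) i = vtx (\<lambda>S. f (S \<union> T) - f T) (N - T) b i"
proof -
  have e1: "insert i {j\<in>N-T. b j < b i} \<union> T = insert i (T \<union> {j\<in>N-T. b j < b i})" by auto
  have e2: "{j\<in>N-T. b j < b i} \<union> T = T \<union> {j\<in>N-T. b j < b i}" by auto
  show ?thesis unfolding vtx_def cmb_pre_nT[OF assms] e1 e2 by simp
qed

lemma combine:
  assumes "finite N" "T \<subseteq> N" "good f T x D1" "good (\<lambda>S. f (S \<union> T) - f T) (N - T) x D2"
  shows "\<exists>D. good f N x D \<and> (\<forall>\<sigma>\<in>set_pmf D. \<forall>i\<in>T. \<forall>j\<in>N-T. \<sigma> i < \<sigma> j)"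
proof -
  have fT: "finite T" using assms finite_subset by blast
  define D where "D = map_pmf (\<lambda>z. cmb T (fst z) (snd z)) (pair_pmf D1 D2)"
  have "good f N x D"
    unfolding good_def
  proof (intro conjI ballI)
    show "finite (set_pmf D)" using assms by (simp add: D_def good_def)
  next
    fix \<sigma> assume "\<sigma> \<in> set_pmf D"
    then show "inj_on \<sigma> N" using assms fT by (auto simp: D_def good_def intro!: cmb_inj)
  next
    fix i assume i: "i \<in> N"
    show "measure_pmf.expectation D (\<lambda>\<sigma>. vtx f N \<sigma> i) = x i"
    proof (cases "i \<in> T")
      case True
      have "measure_pmf.expectation D (\<lambda>\<sigma>. vtx f N \<sigma> i) =
          measure_pmf.expectation (pair_pmf D1 D2) (\<lambda>z. vtx f T (fst z) i)"
        unfolding D_def integral_map_pmf using vtx_cmb_T[OF fT assms(2) True] by simp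
      also have "\<dots> = x i" using assms(3) True expectation_pair_pmf_fst[of D1 D2 "\<lambda>\<sigma>. vtx f T \<sigma> i"] by (simp add: good_def)
      finally show ?thesis .
    next
      case False
      have "measure_pmf.expectation D (\<lambda>\<sigma>. vtx f N \<sigma> i) =
          measure_pmf.expectation (pair_pmf D1 D2) (\<lambda>z. vtx (\<lambda>S. f (S \<union> T) - f T) (N - T) (snd z) i)"
        unfolding D_def integral_map_pmf using vtx_cmb_nT[OF fT assms(2)] i False by simp
      also have "\<dots> = x i" using assms(4) i False expectation_pair_pmf_snd[of D1 D2 "\<lambda>\<sigma>. vtx (\<lambda>S. f (S \<union> T) - f T) (N - T) \<sigma> i"] by (simp add: good_def)
      finally show ?thesis .
    qed
  qed
  moreover have "\<forall>\<sigma>\<in>set_pmf D. \<forall>i\<in>T. \<forall>j\<in>N-T. \<sigma> i < \<sigma> j"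
    using cmb_order[OF fT] by (auto simp: D_def)
  ultimately show ?thesis by blast
qed

lemma base_split:
  assumes "finite N" "isbase f N y" "T \<subseteq> N" "sum y T = f T"
  shows "isbase f T y" "isbase (\<lambda>S. f (S \<union> T) - f T) (N - T) y"
proof -
  show "isbase f T y" using assms by (auto simp: isbase_def)
  have fT: "finite T" using assms finite_subset by blast
  have "sum y S \<le> f (S \<union> T) - f T" if "S \<subseteq> N - T" for S
  proof -
    have fS: "finite S" using that assms finite_subset by blast
    have "sum y (S \<union> T) = sum y S + sum y T" using that fS fT by (intro sum.union_disjoint) auto
    moreover have "S \<union> T \<subseteq> N" using assms that by auto
    then have "sum y (S \<union> T) \<le> f (S \<union> T)" using assms by (auto simp: isbase_def)
    ultimately show ?thesis using assms by simp
  qed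
  moreover have "sum y (N - T) = f ((N - T) \<union> T) - f T"
  proof -
    have "sum y N = sum y (N - T) + sum y T" using assms fT by (metis sum.subset_diff)
    moreover have "(N - T) \<union> T = N" using assms by auto
    ultimately show ?thesis using assms by (simp add: isbase_def)
  qed
  ultimately show "isbase (\<lambda>S. f (S \<union> T) - f T) (N - T) y" by (simp add: isbase_def)
qed



lemma move:
  assumes fN: "finite N" and b: "isbase f N x" and ab: "a \<in> N" "b \<in> N" "a \<noteq> b"
    and nt: "\<not> (\<exists>T. T \<subseteq> N \<and> T \<noteq> {} \<and> T \<noteq> N \<and> sum x T = f T)"
  shows "\<exists>t>0. isbase f N (\<lambda>k. x k + (if k = a then t else 0) - (if k = b then t else 0)) \<and>
     (\<exists>T. T \<subseteq> N \<and> T \<noteq> {} \<and> T \<noteq> N \<and> sum (\<lambda>k. x k + (if k = a then t else 0) - (if k = b then t else 0)) T = f T)"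
proof -
  define C where "C = {S. S \<subseteq> N \<and> a \<in> S \<and> b \<notin> S}"
  have finC: "finite C" unfolding C_def using fN by (rule finite_subset[rotated, OF finite_Pow_iff[THEN iffD2]]) auto
  have "{a} \<in> C" using ab by (auto simp: C_def)
  define t where "t = Min ((\<lambda>S. f S - sum x S) ` C)"
  have "t \<in> (\<lambda>S. f S - sum x S) ` C" unfolding t_def using finC \<open>{a} \<in> C\<close> by (intro Min_in) auto
  then obtain S0 where S0: "S0 \<in> C" "t = f S0 - sum x S0" by auto
  have tle: "t \<le> f S - sum x S" if "S \<in> C" for S unfolding t_def using finC that by (intro Min_le) auto
  have "S0 \<subseteq> N" "S0 \<noteq> {}" "S0 \<noteq> N" using S0 ab by (auto simp: C_def)
  then have "sum x S0 \<noteq> f S0" "sum x S0 \<le> f S0" using nt b by (auto simp: isbase_def)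
  then have tpos: "t > 0" using S0 by simp
  define z where "z = (\<lambda>k. x k + (if k = a then t else 0) - (if k = b then t else 0))"
  have sumz: "sum z S = sum x S + (if a \<in> S then t else 0) - (if b \<in> S then t else 0)" if "S \<subseteq> N" for S
  proof -
    have "finite S" using that fN finite_subset by blast
    then show ?thesis unfolding z_def by (simp add: sum.distrib sum_subtractf)
  qed
  have "isbase f N z"
    unfolding isbase_def
  proof (intro conjI allI impI)
    fix S assume S: "S \<subseteq> N"
    have xS: "sum x S \<le> f S" using S b by (auto simp: isbase_def)
    show "sum z S \<le> f S"
    proof (cases "a \<in> S \<and> b \<notin> S")
      case True
      then have "S \<in> C" using S by (auto simp: C_def)
      then show ?thesis using tle[of S] sumz[OF S] True by simp
    next
      case False
      then show ?thesis using sumz[OF S] xS tpos by auto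
    qed
  next
    show "sum z N = f N" using sumz[of N] ab b by (simp add: isbase_def)
  qed
  moreover have "sum z S0 = f S0" using sumz[OF \<open>S0 \<subseteq> N\<close>] S0 by (auto simp: C_def)
  ultimately show ?thesis using tpos \<open>S0 \<subseteq> N\<close> \<open>S0 \<noteq> {}\<close> \<open>S0 \<noteq> N\<close> unfolding z_def by blast
qed

lemma mix:
  assumes "good f N y1 D1" "good f N y2 D2" "0 \<le> l" "l \<le> 1"
  shows "good f N (\<lambda>k. l * y1 k + (1 - l) * y2 k) (bernoulli_pmf l \<bind> (\<lambda>b. if b then D1 else D2))"
  unfolding good_def
proof (intro conjI ballI)
  show "finite (set_pmf (bernoulli_pmf l \<bind> (\<lambda>b. if b then D1 else D2)))"
    using assms by (auto simp: good_def)
next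
  fix \<sigma> assume "\<sigma> \<in> set_pmf (bernoulli_pmf l \<bind> (\<lambda>b. if b then D1 else D2))"
  then show "inj_on \<sigma> N" using assms by (auto simp: good_def split: if_splits)
next
  fix i assume i: "i \<in> N"
  have "measure_pmf.expectation (bernoulli_pmf l \<bind> (\<lambda>b. if b then D1 else D2)) (\<lambda>\<sigma>. vtx f N \<sigma> i)
     = (\<Sum>b\<in>UNIV. pmf (bernoulli_pmf l) b *\<^sub>R measure_pmf.expectation (if b then D1 else D2) (\<lambda>\<sigma>. vtx f N \<sigma> i))"
    using assms by (intro pmf_expectation_bind) (auto simp: good_def)
  also have "\<dots> = l * y1 i + (1 - l) * y2 i"
    using assms i by (simp add: UNIV_bool good_def)
  finally show "measure_pmf.expectation (bernoulli_pmf l \<bind> (\<lambda>b. if b then D1 else D2)) (\<lambda>\<sigma>. vtx f N \<sigma> i) = l * y1 i + (1 - l) * y2 i" .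
qed

lemma good_cong: "good f N y D \<Longrightarrow> (\<And>k. k \<in> N \<Longrightarrow> y k = x k) \<Longrightarrow> good f N x D"
  by (simp add: good_def)

lemma decomp: "finite N \<Longrightarrow> f {} = 0 \<Longrightarrow> isbase f N x \<Longrightarrow> \<exists>D. good f N x D"
proof (induction "card N" arbitrary: N f x rule: less_induct)
  case less
  have split: "\<exists>D. good f N y D" if y: "isbase f N y" and T: "T \<subseteq> N" "T \<noteq> {}" "T \<noteq> N" "sum y T = f T" for y T
  proof -
    have c1: "card T < card N" using T less.prems by (intro psubset_card_mono) auto
    have c2: "card (N - T) < card N" using T less.prems by (intro psubset_card_mono) auto
    note bs = base_split[OF less.prems(1) y T(1) T(4)]
    obtain D1 where D1: "good f T y D1"
      using less.hyps[OF c1 _ _ bs(1)] less.prems T finite_subset by blast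
    obtain D2 where D2: "good (\<lambda>S. f (S \<union> T) - f T) (N - T) y D2"
      using less.hyps[OF c2 _ _ bs(2)] less.prems by auto
    show ?thesis using combine[OF less.prems(1) T(1) D1 D2] by blast
  qed
  show ?case
  proof (cases "\<exists>T. T \<subseteq> N \<and> T \<noteq> {} \<and> T \<noteq> N \<and> sum x T = f T")
    case True
    then show ?thesis using split less.prems by blast
  next
    case nt: False
    show ?thesis
    proof (cases "card N \<le> 1")
      case True
      then have "card N = 0 \<or> card N = 1" by linarith
      then have "N = {} \<or> (\<exists>a. N = {a})" using less.prems card_1_singleton_iff by auto
      then show ?thesis
      proof
        assume "N = {}" then show ?thesis
          by (intro exI[of _ "return_pmf (\<lambda>_. 0)"]) (simp add: good_def)
      next
        assume "\<exists>a. N = {a}"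
        then obtain a where a: "N = {a}" by blast
        show ?thesis
          by (intro exI[of _ "return_pmf (\<lambda>_. 0)"]) (use a less.prems in \<open>simp add: good_def vtx_def isbase_def\<close>)
      qed
    next
      case False
      then obtain i j where ij: "i \<in> N" "j \<in> N" "i \<noteq> j" using less.prems
      proof -
        have "\<not> (\<forall>a\<in>N. \<forall>b\<in>N. a = b)" using False card_le_Suc0_iff_eq[OF less.prems(1)] by simp
        then show ?thesis using that by blast
      qed
      obtain t1 where t1: "t1 > 0" "isbase f N (\<lambda>k. x k + (if k = i then t1 else 0) - (if k = j then t1 else 0))"
        "\<exists>T. T \<subseteq> N \<and> T \<noteq> {} \<and> T \<noteq> N \<and> sum (\<lambda>k. x k + (if k = i then t1 else 0) - (if k = j then t1 else 0)) T = f T"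
        using move[OF less.prems(1) less.prems(3) ij nt] by blast
      obtain t2 where t2: "t2 > 0" "isbase f N (\<lambda>k. x k + (if k = j then t2 else 0) - (if k = i then t2 else 0))"
        "\<exists>T. T \<subseteq> N \<and> T \<noteq> {} \<and> T \<noteq> N \<and> sum (\<lambda>k. x k + (if k = j then t2 else 0) - (if k = i then t2 else 0)) T = f T"
        using move[OF less.prems(1) less.prems(3) ij(2,1) ij(3)[symmetric] nt] by blast
      obtain D1 where D1: "good f N (\<lambda>k. x k + (if k = i then t1 else 0) - (if k = j then t1 else 0)) D1"
        using split[OF t1(2)] t1(3) by blast
      obtain D2 where D2: "good f N (\<lambda>k. x k + (if k = j then t2 else 0) - (if k = i then t2 else 0)) D2"
        using split[OF t2(2)] t2(3) by blast
      define l where "l = t2 / (t1 + t2)"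
      have l: "0 \<le> l" "l \<le> 1" using t1 t2 by (auto simp: l_def field_simps)
      have h: "l * t1 = (1 - l) * t2" using t1(1) t2(1) by (simp add: l_def field_simps)
      have eq: "l * (x k + (if k = i then t1 else 0) - (if k = j then t1 else 0)) +
          (1 - l) * (x k + (if k = j then t2 else 0) - (if k = i then t2 else 0)) = x k" for k
      proof -
        have "l * (x k + (if k = i then t1 else 0) - (if k = j then t1 else 0)) +
          (1 - l) * (x k + (if k = j then t2 else 0) - (if k = i then t2 else 0)) =
          x k + (if k = i then l * t1 - (1 - l) * t2 else 0) - (if k = j then l * t1 - (1 - l) * t2 else 0)"
          using ij(3) by (simp add: algebra_simps)
        then show ?thesis using h by simp
      qed
      show ?thesis using good_cong[OF mix[OF D1 D2 l]] eq by blast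
    qed
  qed
qed




lemma tight_union:
  fixes f :: "nat set \<Rightarrow> real" and x :: "nat \<Rightarrow> real"
  assumes fN: "finite N" and P: "\<And>S. S \<subseteq> N \<Longrightarrow> sum x S \<le> f S"
    and sub: "\<And>S T. S \<subseteq> N \<Longrightarrow> T \<subseteq> N \<Longrightarrow> f (S \<union> T) + f (S \<inter> T) \<le> f S + f T"
    and ST: "S \<subseteq> N" "T \<subseteq> N" "sum x S = f S" "sum x T = f T"
  shows "sum x (S \<union> T) = f (S \<union> T)"
proof -
  have "finite S" "finite T" using ST fN finite_subset by auto
  then have "sum x (S \<union> T) + sum x (S \<inter> T) = sum x S + sum x T" by (rule sum.union_inter)
  moreover have "sum x (S \<union> T) \<le> f (S \<union> T)" "sum x (S \<inter> T) \<le> f (S \<inter> T)" using ST by (auto intro!: P)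
  moreover have "f (S \<union> T) + f (S \<inter> T) \<le> f S + f T" using ST sub by auto
  ultimately show ?thesis using ST by linarith
qed

lemma extend:
  fixes f :: "nat set \<Rightarrow> real" and r :: "nat \<Rightarrow> real"
  assumes fN: "finite N" and f0: "f {} = 0"
    and sub: "\<And>S T. S \<subseteq> N \<Longrightarrow> T \<subseteq> N \<Longrightarrow> f (S \<union> T) + f (S \<inter> T) \<le> f S + f T"
    and r: "\<And>S. S \<subseteq> N \<Longrightarrow> sum r S \<le> f S"
  shows "\<exists>x. isbase f N x \<and> (\<forall>i. r i \<le> x i)"
proof -
  have step: "\<exists>x. (\<forall>S. S \<subseteq> N \<longrightarrow> sum x S \<le> f S) \<and> (\<forall>i. r i \<le> x i) \<and>
      (\<forall>i\<in>K. \<exists>S. S \<subseteq> N \<and> i \<in> S \<and> sum x S = f S)" if "finite K" "K \<subseteq> N" for K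
    using that
  proof (induction K rule: finite_induct)
    case empty
    show ?case using r by (intro exI[of _ r]) auto
  next
    case (insert a K)
    then obtain x where x: "\<forall>S. S \<subseteq> N \<longrightarrow> sum x S \<le> f S" "\<forall>i. r i \<le> x i"
      "\<forall>i\<in>K. \<exists>S. S \<subseteq> N \<and> i \<in> S \<and> sum x S = f S" by auto
    have aN: "a \<in> N" using insert by auto
    define C where "C = {S. S \<subseteq> N \<and> a \<in> S}"
    have finC: "finite C" unfolding C_def using fN by (rule finite_subset[rotated, OF finite_Pow_iff[THEN iffD2]]) auto
    have "{a} \<in> C" using aN by (auto simp: C_def)
    define d where "d = Min ((\<lambda>S. f S - sum x S) ` C)"
    have "d \<in> (\<lambda>S. f S - sum x S) ` C" unfolding d_def using finC \<open>{a} \<in> C\<close> by (intro Min_in) auto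
    then obtain S0 where S0: "S0 \<in> C" "d = f S0 - sum x S0" by auto
    have dle: "d \<le> f S - sum x S" if "S \<in> C" for S unfolding d_def using finC that by (intro Min_le) auto
    have dpos: "d \<ge> 0" using S0 x(1) by (auto simp: C_def)
    define y where "y = (\<lambda>k. x k + (if k = a then d else 0))"
    have sumy: "sum y S = sum x S + (if a \<in> S then d else 0)" if "S \<subseteq> N" for S
    proof -
      have "finite S" using that fN finite_subset by blast
      then show ?thesis unfolding y_def by (simp add: sum.distrib)
    qed
    have P: "\<forall>S. S \<subseteq> N \<longrightarrow> sum y S \<le> f S"
    proof (intro allI impI)
      fix S assume S: "S \<subseteq> N"
      show "sum y S \<le> f S"
      proof (cases "a \<in> S")
        case True
        then have "S \<in> C" using S by (auto simp: C_def)
        then show ?thesis using dle[of S] sumy[OF S] True by simp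
      next
        case False then show ?thesis using sumy[OF S] x(1) S by auto
      qed
    qed
    moreover have "\<forall>i. r i \<le> y i" using x(2) dpos by (auto simp: y_def intro: order.trans)
    moreover have "\<forall>i\<in>insert a K. \<exists>S. S \<subseteq> N \<and> i \<in> S \<and> sum y S = f S"
    proof
      fix i assume "i \<in> insert a K"
      then show "\<exists>S. S \<subseteq> N \<and> i \<in> S \<and> sum y S = f S"
      proof
        assume "i = a"
        then show ?thesis using S0 sumy[of S0] by (intro exI[of _ S0]) (auto simp: C_def)
      next
        assume "i \<in> K"
        then obtain S where S: "S \<subseteq> N" "i \<in> S" "sum x S = f S" using x(3) by blast
        have "sum y S \<le> f S" using P S by auto
        moreover have "sum x S \<le> sum y S" using sumy[OF S(1)] dpos by auto
        ultimately show ?thesis using S by (intro exI[of _ S]) auto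
      qed
    qed
    ultimately show ?case by blast
  qed
  obtain x where x: "\<forall>S. S \<subseteq> N \<longrightarrow> sum x S \<le> f S" "\<forall>i. r i \<le> x i"
      "\<forall>i\<in>N. \<exists>S. S \<subseteq> N \<and> i \<in> S \<and> sum x S = f S" using step[OF fN] by blast
  have cover: "\<exists>S. S \<subseteq> N \<and> K \<subseteq> S \<and> sum x S = f S" if "finite K" "K \<subseteq> N" for K
    using that
  proof (induction K rule: finite_induct)
    case empty
    show ?case using f0 by (intro exI[of _ "{}"]) auto
  next
    case (insert a K)
    then obtain S where S: "S \<subseteq> N" "K \<subseteq> S" "sum x S = f S" by auto
    obtain Sa where Sa: "Sa \<subseteq> N" "a \<in> Sa" "sum x Sa = f Sa" using x(3) insert by auto
    have "sum x (S \<union> Sa) = f (S \<union> Sa)"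
      by (rule tight_union[OF fN _ sub S(1) Sa(1) S(3) Sa(3)]) (use x(1) in auto)
    then show ?case using S Sa by (intro exI[of _ "S \<union> Sa"]) auto
  qed
  obtain S where "S \<subseteq> N" "N \<subseteq> S" "sum x S = f S" using cover[OF fN] by blast
  then have "S = N" by auto
  then show ?thesis using x \<open>sum x S = f S\<close> by (auto simp: isbase_def)
qed



lemma (in prob_space) union_prob:
  assumes ind: "indep_events A I" and S: "finite S" "S \<subseteq> I"
  shows "prob (\<Union>j\<in>S. A j) = 1 - (\<Prod>j\<in>S. 1 - prob (A j))"
proof -
  have ev: "\<And>i. i \<in> I \<Longrightarrow> A i \<in> events" using ind by (auto simp: indep_events_def)
  have Kev: "space M \<inter> (\<Inter>k\<in>K. A k) \<in> events" if "finite K" "K \<subseteq> I" for K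
  proof (cases "K = {}")
    case True then show ?thesis by simp
  next
    case False
    have "(\<Inter>k\<in>K. A k) \<in> events" using that False ev by (intro sets.finite_INT) auto
    then show ?thesis by simp
  qed
  have gen: "\<forall>K. finite K \<longrightarrow> K \<subseteq> I \<longrightarrow> K \<inter> S = {} \<longrightarrow>
      prob ((space M \<inter> (\<Inter>k\<in>K. A k)) - (\<Union>j\<in>S. A j)) = (\<Prod>k\<in>K. prob (A k)) * (\<Prod>j\<in>S. 1 - prob (A j))"
    using S
  proof (induction S rule: finite_induct)
    case empty
    show ?case
    proof (intro allI impI)
      fix K assume K: "finite K" "K \<subseteq> I" "K \<inter> {} = {}"
      show "prob (space M \<inter> (\<Inter>k\<in>K. A k) - (\<Union>j\<in>{}. A j)) = (\<Prod>k\<in>K. prob (A k)) * (\<Prod>j\<in>{}. 1 - prob (A j))"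
      proof (cases "K = {}")
        case True then show ?thesis by (simp add: prob_space)
      next
        case False
        then obtain k0 where "k0 \<in> K" by blast
        then have "(\<Inter>k\<in>K. A k) \<subseteq> space M" using ev[of k0] K sets.sets_into_space by blast
        then have "space M \<inter> (\<Inter>k\<in>K. A k) = (\<Inter>k\<in>K. A k)" by blast
        then show ?thesis using ind K False by (simp add: indep_events_def)
      qed
    qed
  next
    case (insert a S)
    show ?case
    proof (intro allI impI)
      fix K assume K: "finite K" "K \<subseteq> I" "K \<inter> insert a S = {}"
      define X where "X = space M \<inter> (\<Inter>k\<in>K. A k) - (\<Union>j\<in>S. A j)"
      have aI: "a \<in> I" using insert by auto
      have IH: "\<And>K. finite K \<Longrightarrow> K \<subseteq> I \<Longrightarrow> K \<inter> S = {} \<Longrightarrow>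
        prob ((space M \<inter> (\<Inter>k\<in>K. A k)) - (\<Union>j\<in>S. A j)) = (\<Prod>k\<in>K. prob (A k)) * (\<Prod>j\<in>S. 1 - prob (A j))"
        using insert.IH insert.prems by blast
      have SI: "S \<subseteq> I" using insert by auto
      have Uev: "(\<Union>j\<in>S. A j) \<in> events" using insert.hyps(1) SI ev by (intro sets.finite_UN) auto
      have Xev: "X \<in> events" unfolding X_def using Kev[OF K(1,2)] Uev by auto
      have e1: "space M \<inter> (\<Inter>k\<in>K. A k) - (\<Union>j\<in>insert a S. A j) = X - A a" by (auto simp: X_def)
      have e2: "X \<inter> A a = space M \<inter> (\<Inter>k\<in>insert a K. A k) - (\<Union>j\<in>S. A j)" by (auto simp: X_def)
      have "prob (X - A a) = prob X - prob (X \<inter> A a)" using Xev ev[OF aI] by (rule finite_measure_Diff')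
      also have "prob X = (\<Prod>k\<in>K. prob (A k)) * (\<Prod>j\<in>S. 1 - prob (A j))"
        unfolding X_def by (rule IH) (use K in auto)
      also have "prob (X \<inter> A a) = (\<Prod>k\<in>insert a K. prob (A k)) * (\<Prod>j\<in>S. 1 - prob (A j))"
        unfolding e2 by (rule IH) (use K aI insert.hyps(2) in auto)
      also have "(\<Prod>k\<in>insert a K. prob (A k)) = prob (A a) * (\<Prod>k\<in>K. prob (A k))"
        using K by (intro prod.insert) auto
      finally show "prob (space M \<inter> (\<Inter>k\<in>K. A k) - (\<Union>j\<in>insert a S. A j)) =
          (\<Prod>k\<in>K. prob (A k)) * (\<Prod>j\<in>insert a S. 1 - prob (A j))"
        unfolding e1 using insert.hyps by (simp add: algebra_simps)
    qed
  qed
  from gen[rule_format, of "{}"] have "prob (space M - (\<Union>j\<in>S. A j)) = (\<Prod>j\<in>S. 1 - prob (A j))" by simp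
  moreover have "(\<Union>j\<in>S. A j) \<in> events" using S ev by (intro sets.finite_UN) auto
  ultimately show ?thesis using prob_compl by simp
qed

lemma (in prob_space) first_event_vtx:
  assumes ev: "\<And>i. i \<in> {1..n} \<Longrightarrow> A i \<in> events" and i: "i \<in> {1..n}"
  shows "prob (first_event n A \<sigma> i) = vtx (\<lambda>S. prob (\<Union>j\<in>S. A j)) {1..n} \<sigma> i"
proof -
  define P where "P = {j\<in>{1..n}. \<sigma> j < \<sigma> i}"
  have U: "(\<Union>j\<in>P. A j) \<in> events" using ev by (intro sets.finite_UN) (auto simp: P_def)
  have "first_event n A \<sigma> i = (A i \<union> (\<Union>j\<in>P. A j)) - (\<Union>j\<in>P. A j)"
    by (auto simp: first_event_def P_def)
  then have "prob (first_event n A \<sigma> i) = prob (A i \<union> (\<Union>j\<in>P. A j)) - prob (\<Union>j\<in>P. A j)"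
    using U ev[OF i] by (simp add: finite_measure_Diff)
  moreover have "(\<Union>j\<in>insert i P. A j) = A i \<union> (\<Union>j\<in>P. A j)" by auto
  ultimately show ?thesis by (simp add: vtx_def P_def)
qed



definition nrm :: "nat set \<Rightarrow> (nat \<Rightarrow> nat) \<Rightarrow> nat \<Rightarrow> nat" where
  "nrm N \<sigma> i = (if i \<in> N then Suc (card {j\<in>N. \<sigma> j < \<sigma> i}) else i)"

lemma nrm_less:
  assumes "finite N" "i \<in> N" "j \<in> N"
  shows "nrm N \<sigma> j < nrm N \<sigma> i \<longleftrightarrow> \<sigma> j < \<sigma> i"
proof (cases "\<sigma> j < \<sigma> i")
  case True
  have s1: "{k\<in>N. \<sigma> k < \<sigma> j} \<subseteq> {k\<in>N. \<sigma> k < \<sigma> i}" using True by auto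
  have s2: "j \<in> {k\<in>N. \<sigma> k < \<sigma> i}" "j \<notin> {k\<in>N. \<sigma> k < \<sigma> j}" using True assms by simp_all
  have "{k\<in>N. \<sigma> k < \<sigma> j} \<subset> {k\<in>N. \<sigma> k < \<sigma> i}" using s1 s2 by blast
  then have "card {k\<in>N. \<sigma> k < \<sigma> j} < card {k\<in>N. \<sigma> k < \<sigma> i}" using assms by (intro psubset_card_mono) auto
  then show ?thesis using True assms by (simp add: nrm_def)
next
  case False
  have "{k\<in>N. \<sigma> k < \<sigma> i} \<subseteq> {k\<in>N. \<sigma> k < \<sigma> j}" using False by auto
  then have "card {k\<in>N. \<sigma> k < \<sigma> i} \<le> card {k\<in>N. \<sigma> k < \<sigma> j}" using assms by (intro card_mono) auto
  then show ?thesis using False assms by (simp add: nrm_def)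
qed

lemma nrm_pre: "finite N \<Longrightarrow> i \<in> N \<Longrightarrow> {j\<in>N. nrm N \<sigma> j < nrm N \<sigma> i} = {j\<in>N. \<sigma> j < \<sigma> i}"
proof -
  assume a: "finite N" "i \<in> N"
  show ?thesis
  proof (rule set_eqI)
    fix j
    show "j \<in> {j\<in>N. nrm N \<sigma> j < nrm N \<sigma> i} \<longleftrightarrow> j \<in> {j\<in>N. \<sigma> j < \<sigma> i}"
      using nrm_less[OF a(1,2), where j=j and \<sigma>=\<sigma>] by blast
  qed
qed

lemma nrm_perm:
  assumes inj: "inj_on \<sigma> {1..n}"
  shows "nrm {1..n} \<sigma> permutes {1..n}"
proof (rule bij_imp_permutes)
  let ?N = "{1..n::nat}"
  have injn: "inj_on (nrm ?N \<sigma>) ?N"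
  proof (rule inj_onI)
    fix i j assume ij: "i \<in> ?N" "j \<in> ?N" "nrm ?N \<sigma> i = nrm ?N \<sigma> j"
    have fin: "finite ?N" by simp
    have e1: "(nrm ?N \<sigma> j < nrm ?N \<sigma> i) \<longleftrightarrow> (\<sigma> j < \<sigma> i)" by (rule nrm_less[OF fin ij(1) ij(2)])
    have e2: "(nrm ?N \<sigma> i < nrm ?N \<sigma> j) \<longleftrightarrow> (\<sigma> i < \<sigma> j)" by (rule nrm_less[OF fin ij(2) ij(1)])
    have "\<not> \<sigma> j < \<sigma> i" using e1 unfolding ij(3) by simp
    moreover have "\<not> \<sigma> i < \<sigma> j" using e2 unfolding ij(3) by simp
    ultimately have "\<sigma> i = \<sigma> j" by simp
    then show "i = j" by (rule inj_onD[OF inj _ ij(1) ij(2)])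
  qed
  have sub: "nrm ?N \<sigma> ` ?N \<subseteq> ?N"
  proof
    fix y assume "y \<in> nrm ?N \<sigma> ` ?N"
    then obtain i where i: "i \<in> ?N" "y = nrm ?N \<sigma> i" by blast
    have "{j\<in>?N. \<sigma> j < \<sigma> i} \<subseteq> ?N - {i}" by auto
    then have "card {j\<in>?N. \<sigma> j < \<sigma> i} \<le> card (?N - {i})" by (intro card_mono) auto
    also have "\<dots> = n - 1" using i by simp
    finally have c: "card {j\<in>?N. \<sigma> j < \<sigma> i} \<le> n - 1" .
    have "n \<ge> 1" using i by simp
    then have "Suc (card {j\<in>?N. \<sigma> j < \<sigma> i}) \<le> n" using c by linarith
    then show "y \<in> ?N" using i by (simp add: nrm_def)
  qed
  have "nrm ?N \<sigma> ` ?N = ?N" using endo_inj_surj[OF _ sub injn] by simp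
  then show "bij_betw (nrm ?N \<sigma>) ?N ?N" using injn by (simp add: bij_betw_def)
next
  fix x assume "x \<notin> {1..n}" then show "nrm {1..n} \<sigma> x = x" unfolding nrm_def by (rule if_not_P)
qed



theorem claim2:
  fixes M :: "'a measure" and A :: "nat \<Rightarrow> 'a set" and p r :: "nat \<Rightarrow> real"
    and n :: nat and S0 :: "nat set"
  assumes "prob_space M"
    and "\<And>i. i \<in> {1..n} \<Longrightarrow> A i \<in> sets M"
    and "prob_space.indep_events M A {1..n}"
    and "\<And>i. i \<in> {1..n} \<Longrightarrow> p i = measure M (A i)"
    and "\<And>i. i \<in> {1..n} \<Longrightarrow> 0 < p i \<and> p i < 1"
    and "\<And>i. i \<in> {1..n} \<Longrightarrow> r i \<ge> 0"
    and "\<And>S. S \<subseteq> {1..n} \<Longrightarrow> (\<Sum>i\<in>S. r i) + (\<Prod>i\<in>S. 1 - p i) \<le> 1"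
    and "S0 \<subseteq> {1..n}"
    and "(\<Sum>i\<in>S0. r i) + (\<Prod>i\<in>S0. 1 - p i) = 1"
  shows "\<exists>D :: (nat \<Rightarrow> nat) pmf.
           (\<forall>\<sigma> \<in> set_pmf D. \<sigma> permutes {1..n}) \<and>
           (\<forall>i \<in> {1..n}. measure_pmf.expectation D (\<lambda>\<sigma>. measure M (first_event n A \<sigma> i)) \<ge> r i) \<and>
           (\<forall>\<sigma> \<in> set_pmf D. \<forall>i \<in> S0. \<forall>j \<in> {1..n} - S0. \<sigma> i < \<sigma> j)"
proof -
  interpret P: prob_space M by fact
  define N where "N = {1..n}"
  define f where "f = (\<lambda>S. P.prob (\<Union>j\<in>S. A j))"
  have fN: "finite N" by (simp add: N_def)
  have ev: "\<And>i. i \<in> N \<Longrightarrow> A i \<in> P.events" using assms(2) by (simp add: N_def)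
  have fS: "f S = 1 - (\<Prod>i\<in>S. 1 - p i)" if "S \<subseteq> N" for S
  proof -
    have finS: "finite S" using that fN finite_subset by blast
    have "f S = 1 - (\<Prod>j\<in>S. 1 - P.prob (A j))" unfolding f_def
      by (rule P.union_prob[OF assms(3) finS]) (use that in \<open>simp add: N_def\<close>)
    also have "(\<Prod>j\<in>S. 1 - P.prob (A j)) = (\<Prod>i\<in>S. 1 - p i)"
      using that assms(4) by (intro prod.cong) (auto simp: N_def)
    finally show ?thesis .
  qed
  have f0: "f {} = 0" by (simp add: f_def)
  have sub: "f (S \<union> T) + f (S \<inter> T) \<le> f S + f T" if ST: "S \<subseteq> N" "T \<subseteq> N" for S T
  proof -
    define US where "US = (\<Union>j\<in>S. A j)"
    define UT where "UT = (\<Union>j\<in>T. A j)"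
    have finS: "finite S" "finite T" using ST fN finite_subset by auto
    have US: "US \<in> P.events" unfolding US_def using finS ST ev by (intro sets.finite_UN) auto
    have UT: "UT \<in> P.events" unfolding UT_def using finS ST ev by (intro sets.finite_UN) auto
    have e1: "f (S \<union> T) = P.prob (US \<union> UT)" unfolding f_def US_def UT_def by (simp add: UN_Un)
    have e2: "f (S \<inter> T) \<le> P.prob (US \<inter> UT)" unfolding f_def
      using US UT by (intro P.finite_measure_mono) (auto simp: US_def UT_def)
    have e3: "P.prob (US \<union> UT) = P.prob US + P.prob (UT - US)" by (rule P.finite_measure_Union'[OF US UT])
    have e4: "P.prob (UT - US) = P.prob UT - P.prob (UT \<inter> US)" by (rule P.finite_measure_Diff'[OF UT US])
    have e5: "UT \<inter> US = US \<inter> UT" by blast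
    have "f S = P.prob US" "f T = P.prob UT" by (simp_all add: f_def US_def UT_def)
    then show ?thesis using e1 e2 e3 e4[unfolded e5] by linarith
  qed
  have r: "sum r S \<le> f S" if "S \<subseteq> N" for S using assms(7)[of S] that fS[OF that] by (simp add: N_def)
  obtain x where x: "isbase f N x" "\<forall>i. r i \<le> x i" using extend[OF fN f0 sub r] by blast
  have S0N: "S0 \<subseteq> N" using assms(8) by (simp add: N_def)
  have tight: "sum x S0 = f S0"
  proof -
    have "sum r S0 \<le> sum x S0" using x(2) by (intro sum_mono) auto
    moreover have "sum r S0 = f S0" using assms(9) fS[OF S0N] by simp
    moreover have "sum x S0 \<le> f S0" using x(1) S0N by (simp add: isbase_def)
    ultimately show ?thesis by simp
  qed
  note bs = base_split[OF fN x(1) S0N tight]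
  have finS0: "finite S0" using fN S0N finite_subset by blast
  obtain D1 where D1: "good f S0 x D1" using decomp[OF finS0 f0 bs(1)] by blast
  obtain D2 where D2: "good (\<lambda>S. f (S \<union> S0) - f S0) (N - S0) x D2"
    using decomp[OF _ _ bs(2)] fN by auto
  obtain D0 where D0: "good f N x D0" "\<forall>\<sigma>\<in>set_pmf D0. \<forall>i\<in>S0. \<forall>j\<in>N-S0. \<sigma> i < \<sigma> j"
    using combine[OF fN S0N D1 D2] by blast
  define D where "D = map_pmf (nrm N) D0"
  have vt: "P.prob (first_event n A (nrm N \<sigma>) i) = vtx f N \<sigma> i" if i: "i \<in> N" for \<sigma> i
  proof -
    have "P.prob (first_event n A (nrm N \<sigma>) i) = vtx f N (nrm N \<sigma>) i" unfolding f_def N_def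
      by (rule P.first_event_vtx) (use assms(2) i in \<open>auto simp: N_def\<close>)
    also have "vtx f N (nrm N \<sigma>) i = vtx f N \<sigma> i" unfolding vtx_def nrm_pre[OF fN i] ..
    finally show ?thesis .
  qed
  have c1: "\<forall>\<sigma> \<in> set_pmf D. \<sigma> permutes {1..n}"
  proof
    fix \<sigma> assume "\<sigma> \<in> set_pmf D"
    then obtain \<tau> where \<tau>: "\<tau> \<in> set_pmf D0" "\<sigma> = nrm N \<tau>" by (auto simp: D_def)
    then have "inj_on \<tau> {1..n}" using D0(1) by (auto simp: good_def N_def)
    then show "\<sigma> permutes {1..n}" using \<tau> nrm_perm by (simp add: N_def)
  qed
  have c2: "\<forall>i \<in> {1..n}. measure_pmf.expectation D (\<lambda>\<sigma>. measure M (first_event n A \<sigma> i)) \<ge> r i"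
  proof
    fix i assume i: "i \<in> {1..n}"
    then have iN: "i \<in> N" by (simp add: N_def)
    have "measure_pmf.expectation D (\<lambda>\<sigma>. measure M (first_event n A \<sigma> i)) =
        measure_pmf.expectation D0 (\<lambda>\<sigma>. vtx f N \<sigma> i)"
      unfolding D_def integral_map_pmf using vt[OF iN] by simp
    also have "\<dots> = x i" using D0(1) iN by (simp add: good_def)
    finally show "measure_pmf.expectation D (\<lambda>\<sigma>. measure M (first_event n A \<sigma> i)) \<ge> r i"
      using x(2) by simp
  qed
  have c3: "\<forall>\<sigma> \<in> set_pmf D. \<forall>i \<in> S0. \<forall>j \<in> {1..n} - S0. \<sigma> i < \<sigma> j"
  proof (intro ballI)
    fix \<sigma> i j assume s: "\<sigma> \<in> set_pmf D" and ij: "i \<in> S0" "j \<in> {1..n} - S0"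
    then obtain \<tau> where \<tau>: "\<tau> \<in> set_pmf D0" "\<sigma> = nrm N \<tau>" by (auto simp: D_def)
    have jN: "j \<in> N - S0" using ij by (simp add: N_def)
    have iN: "i \<in> N" using ij S0N by auto
    have "\<tau> i < \<tau> j" using D0(2) \<tau>(1) ij(1) jN by blast
    then show "\<sigma> i < \<sigma> j" using nrm_less[OF fN _ iN, of j \<tau>] jN \<tau>(2) by simp
  qed
  show ?thesis using c1 c2 c3 by blast
qed

end
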